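(* In the setting described in the context, fix a round $t\ge1$ and let $m_t=\arg\max_i\tilde Y_i(t)$. For any given $\gamma\in[1/(N+1),1/N)$, set $v=(2\log(N/(1-\gamma N)))^{-1/2}$. Then $\mathbb{P}(m_t\in N_t\mid\mathcal{H}_t)\ge1-\gamma$.
   Context: Linear contextual bandit with $N$ arms: at round $t$, contexts $X_i(t)\in\mathbb{R}^d$, $i=1,\ldots,N$, are observed and the expected reward of arm $i$ is $X_i(t)^T\beta$ for an unknown $\beta\in\mathbb{R}^d$. $\mathcal{H}_t$ denotes the observed history (past contexts, actions, observed rewards) together with the current contexts $\{X_i(t)\}_{i=1}^N$. Let $a^*_t=\arg\max_iX_i(t)^T\beta$ and $\Delta_i(t)=X_{a^*_t}(t)^T\beta-X_i(t)^T\beta$. Let $\widehat\beta_{t-1}\in\mathbb{R}^d$ be the (doubly robust ridge) estimator computed from $\mathcal{H}_t$, and $V_{t-1}=\sum_{\tau=1}^{t-1}\sum_{i=1}^N X_i(\tau)X_i(\tau)^T+\lambda_{t-1}I$ with $\lambda_{t-1}>0$ (with $\widehat\beta_0=0$, $V_0=\lambda I$, $\lambda>0$). For $x\in\mathbb{R}^d$ and positive definite $A$, $\|x\|_A=\sqrt{x^TAx}$. Given $\mathcal{H}_t$, draw $\tilde\beta_1(t),\ldots,\tilde\beta_N(t)$ independently from $N(\widehat\beta_{t-1},v^2V_{t-1}^{-1})$ and let $\tilde Y_i(t)=X_i(t)^T\tilde\beta_i(t)$. The set of super-unsaturated arms is $$N_t=\Big\{i:\ \Delta_i(t)\le2\|\widehat\beta_{t-1}-\beta\|_2+\sqrt{\|X_{a^*_t}(t)\|^2_{V_{t-1}^{-1}}+\|X_i(t)\|^2_{V_{t-1}^{-1}}}\Big\}.$$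 *)

theory Defs
  imports "HOL-Probability.Probability"
begin

definition outer :: "real ^ 'd \<Rightarrow> real ^ 'd ^ 'd" where
  "outer x = (\<chi> i j. x $ i * x $ j)"

definition wnorm2 :: "real ^ 'd ^ 'd \<Rightarrow> real ^ 'd \<Rightarrow> real" where
  "wnorm2 A x = x \<bullet> (A *v x)"

definition mvn_density :: "real ^ 'd \<Rightarrow> real ^ 'd ^ 'd \<Rightarrow> real ^ 'd \<Rightarrow> real" where
  "mvn_density mu S x =
     exp (- (x - mu) \<bullet> (matrix_inv S *v (x - mu)) / 2)
       / sqrt ((2 * pi) ^ CARD('d) * det S)"

definition mvn :: "real ^ 'd \<Rightarrow> real ^ 'd ^ 'd \<Rightarrow> (real ^ 'd) measure" where
  "mvn mu S = density lborel (\<lambda>x. ennreal (mvn_density mu S x))"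

definition argmax_arm :: "nat \<Rightarrow> (nat \<Rightarrow> real) \<Rightarrow> nat" where
  "argmax_arm N f = (LEAST i. i < N \<and> (\<forall>j<N. f j \<le> f i))"

end

theory Submission
  imports Defs
begin

lemma shear_nn_integral:
  fixes f :: "'a::euclidean_space \<Rightarrow> ennreal" and c e :: 'a
  assumes f[measurable]: "f \<in> borel_measurable borel" and e: "e \<in> Basis" and ce: "c \<bullet> e = 0"
  shows "(\<integral>\<^sup>+y. f (y + (c \<bullet> y) *\<^sub>R e) \<partial>lborel) = (\<integral>\<^sup>+y. f y \<partial>lborel)"
proof -
  interpret P: product_sigma_finite "\<lambda>_::'a. (lborel::real measure)"
    by standard
  define \<phi> :: "('a \<Rightarrow> real) \<Rightarrow> 'a" where "\<phi> g = (\<Sum>b\<in>Basis. g b *\<^sub>R b)" for g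
  have phim[measurable]: "\<phi> \<in> borel_measurable (\<Pi>\<^sub>M b\<in>Basis. lborel)"
    unfolding \<phi>_def by measurable
  define I where "I = Basis - {e}"
  have I: "finite I" "e \<notin> I" "insert e I = Basis" using e by (auto simp: I_def)
  define h where "h x = (\<Sum>b\<in>I. x b * (c \<bullet> b))" for x :: "'a \<Rightarrow> real"
  have phiu: "\<phi> (x(e := z)) = (\<Sum>b\<in>I. x b *\<^sub>R b) + z *\<^sub>R e" for x z
      unfolding \<phi>_def I(3)[symmetric] using I(1,2)
      by (simp add: sum.insert) (rule sum.cong, auto)
  have key: "\<phi> (x(e := y)) + (c \<bullet> \<phi> (x(e := y))) *\<^sub>R e = \<phi> (x(e := y + h x))" for x y
  proof -
    note phiu
    moreover have "c \<bullet> ((\<Sum>b\<in>I. x b *\<^sub>R b) + y *\<^sub>R e) = h x"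
      by (simp add: inner_add_right inner_sum_right ce h_def mult.commute)
    ultimately show ?thesis by (simp add: algebra_simps)
  qed
  have "(\<integral>\<^sup>+y. f (y + (c \<bullet> y) *\<^sub>R e) \<partial>lborel)
      = (\<integral>\<^sup>+g. f (\<phi> g + (c \<bullet> \<phi> g) *\<^sub>R e) \<partial>(\<Pi>\<^sub>M b\<in>Basis. lborel))"
    by (subst lborel_eq) (simp add: nn_integral_distr \<phi>_def)
  also have "\<dots> = (\<integral>\<^sup>+x. (\<integral>\<^sup>+y. f (\<phi> (x(e := y)) + (c \<bullet> \<phi> (x(e := y))) *\<^sub>R e) \<partial>lborel) \<partial>(\<Pi>\<^sub>M b\<in>I. lborel))"
    unfolding I(3)[symmetric] by (rule P.product_nn_integral_insert[OF I(1,2)]) (simp add: I(3))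
  also have "\<dots> = (\<integral>\<^sup>+x. (\<integral>\<^sup>+y. f (\<phi> (x(e := y))) \<partial>lborel) \<partial>(\<Pi>\<^sub>M b\<in>I. lborel))"
  proof (rule nn_integral_cong)
    fix x
    have m: "(\<lambda>y. f (\<phi> (x(e := y)))) \<in> borel_measurable borel"
      unfolding phiu by measurable
    show "(\<integral>\<^sup>+y. f (\<phi> (x(e := y)) + (c \<bullet> \<phi> (x(e := y))) *\<^sub>R e) \<partial>lborel) = (\<integral>\<^sup>+y. f (\<phi> (x(e := y))) \<partial>lborel)"
      unfolding key
      using nn_integral_real_affine[OF m, of 1 "h x"] by (simp add: add.commute)
  qed
  also have "\<dots> = (\<integral>\<^sup>+g. f (\<phi> g) \<partial>(\<Pi>\<^sub>M b\<in>Basis. lborel))"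
    unfolding I(3)[symmetric] by (rule P.product_nn_integral_insert[OF I(1,2), symmetric]) (simp add: I(3))
  also have "\<dots> = (\<integral>\<^sup>+y. f y \<partial>lborel)"
    by (subst (2) lborel_eq) (simp add: nn_integral_distr \<phi>_def)
  finally show ?thesis .
qed

definition spd :: "real^'d^'d \<Rightarrow> bool" where
  "spd A \<longleftrightarrow> transpose A = A \<and> (\<forall>x. x \<noteq> 0 \<longrightarrow> wnorm2 A x > 0)"

lemma wnorm2_sum: "wnorm2 A x = (\<Sum>i\<in>UNIV. \<Sum>j\<in>UNIV. x$i * A$i$j * x$j)"
  unfolding wnorm2_def inner_vec_def matrix_vector_mult_def
  by (simp add: sum_distrib_left mult.assoc)

lemma bilin_axis: "axis j 1 \<bullet> (B *v axis k 1) = (B::real^'d^'d)$j$k"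
  by (simp only: inner_axis' matrix_vector_mul_component inner_axis) simp

lemma wnorm2_add: "wnorm2 B (x + y) = wnorm2 B x + x \<bullet> (B *v y) + y \<bullet> (B *v x) + wnorm2 B y"
  unfolding wnorm2_def by (simp add: matrix_vector_right_distrib inner_add_left inner_add_right)

lemma sym_entry: "transpose A = A \<Longrightarrow> A$j$k = A$k$j"
  by (metis transpose_def vec_lambda_beta)

lemma inner_transpose: "y \<bullet> (transpose E *v w) = (E *v y) \<bullet> (w::real^'d)"
  for E :: "real^'d^'d"
  by (metis dot_lmul_matrix inner_commute transpose_matrix_vector)

lemma polarization:
  fixes A C :: "real^'d^'d"
  assumes "transpose A = A" "transpose C = C" "\<And>y. wnorm2 A y = wnorm2 C y"
  shows "A = C"
proof -
  have "A$j$k = C$j$k" for j k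
  proof -
    have "wnorm2 A (axis j 1 + axis k 1) = wnorm2 C (axis j 1 + axis k 1)" by (rule assms(3))
    moreover have "wnorm2 A (axis j 1) = wnorm2 C (axis j 1)" "wnorm2 A (axis k 1) = wnorm2 C (axis k 1)"
      by (rule assms(3))+
    ultimately show ?thesis
      unfolding wnorm2_add unfolding wnorm2_def bilin_axis
      using sym_entry[OF assms(1), of j k] sym_entry[OF assms(2), of j k] by simp
  qed
  then show ?thesis by (simp add: vec_eq_iff)
qed

lemma sum_split2:
  fixes f :: "'d::finite \<Rightarrow> 'd \<Rightarrow> real"
  shows "(\<Sum>j\<in>UNIV. \<Sum>k\<in>UNIV. f j k) = f i i + (\<Sum>k\<in>UNIV-{i}. f i k) + (\<Sum>j\<in>UNIV-{i}. f j i)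
          + (\<Sum>j\<in>UNIV-{i}. \<Sum>k\<in>UNIV-{i}. f j k)"
proof -
  have r: "(\<Sum>k\<in>UNIV. g k) = g i + (\<Sum>k\<in>UNIV-{i}. g k)" for g :: "'d \<Rightarrow> real"
    by (subst sum.remove[of _ i]) auto
  show ?thesis
    by (simp add: r sum.distrib ac_simps)
qed

lemma spd_diag_pos: "spd A \<Longrightarrow> A$i$i > 0"
  unfolding spd_def using bilin_axis[of i A i] by (metis axis_eq_0_iff wnorm2_def zero_neq_one)

lemma schur_step:
  fixes A :: "real^'d^'d" and i :: 'd
  assumes A: "spd A"
  defines "c \<equiv> (\<chi> j. if j = i then 0 else A$i$j / A$i$i)"
  defines "A' \<equiv> (\<chi> j k. if j = i \<and> k = i then A$i$i else if j = i \<or> k = i then 0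
                        else A$j$k - A$i$j * A$i$k / A$i$i)"
  shows "\<And>y. wnorm2 A y = wnorm2 A' (y + (c \<bullet> y) *\<^sub>R axis i 1)" and "c $ i = 0"
    and "spd A'" and "det A' = det A"
proof -
  have sym: "A$j$k = A$k$j" for j k using A unfolding spd_def by (metis sym_entry)
  have a: "A$i$i > 0" using spd_diag_pos[OF A] .
  define R where "R = UNIV - {i}"
  show ci: "c $ i = 0" by (simp add: c_def)
  show quad: "wnorm2 A y = wnorm2 A' (y + (c \<bullet> y) *\<^sub>R axis i 1)" for y
  proof -
    define s where "s = (\<Sum>k\<in>R. A$i$k * y$k)"
    have cy: "c \<bullet> y = s / A$i$i"
      unfolding inner_vec_def s_def R_def c_def
      by (subst sum.remove[of _ i]) (auto simp: sum_divide_distrib)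
    define z where "z = y + (c \<bullet> y) *\<^sub>R axis i 1"
    have zi: "z$i = y$i + s / A$i$i" by (simp add: z_def cy axis_def)
    have zj: "j \<in> R \<Longrightarrow> z$j = y$j" for j by (simp add: z_def axis_def R_def)
    have L: "wnorm2 A y = A$i$i * (y$i)\<^sup>2 + 2 * y$i * s + (\<Sum>j\<in>R. \<Sum>k\<in>R. y$j * A$j$k * y$k)"
      unfolding wnorm2_sum sum_split2[of _ i] R_def[symmetric] s_def
      by (simp add: sum_distrib_left power2_eq_square sym algebra_simps)
    have "(\<Sum>j\<in>R. \<Sum>k\<in>R. z$j * A'$j$k * z$k)
        = (\<Sum>j\<in>R. \<Sum>k\<in>R. y$j * A$j$k * y$k - (A$i$j * y$j) * (A$i$k * y$k) / A$i$i)"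
      by (intro sum.cong refl) (auto simp: zj A'_def R_def field_simps)
    also have "\<dots> = (\<Sum>j\<in>R. \<Sum>k\<in>R. y$j * A$j$k * y$k) - s * s / A$i$i"
      unfolding s_def sum_product sum_divide_distrib sum_subtractf ..
    finally have RR: "(\<Sum>j\<in>R. \<Sum>k\<in>R. z$j * A'$j$k * z$k) = (\<Sum>j\<in>R. \<Sum>k\<in>R. y$j * A$j$k * y$k) - s * s / A$i$i" .
    have Rz: "wnorm2 A' z = A$i$i * (z$i)\<^sup>2 + (\<Sum>j\<in>R. \<Sum>k\<in>R. z$j * A'$j$k * z$k)"
      unfolding wnorm2_sum sum_split2[of _ i] R_def[symmetric]
      by (simp add: A'_def R_def power2_eq_square)
    show ?thesis
      unfolding z_def[symmetric] Rz RR L zi using a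
      by (simp add: field_simps power2_eq_square)
  qed
  show "spd A'"
    unfolding spd_def
  proof (intro conjI allI impI)
    show "transpose A' = A'"
      by (simp add: transpose_def A'_def vec_eq_iff sym mult.commute)
    fix z :: "real^'d" assume z: "z \<noteq> 0"
    define y where "y = z - (c \<bullet> z) *\<^sub>R axis i 1"
    have "c \<bullet> y = c \<bullet> z" by (simp add: y_def inner_diff_right inner_axis ci)
    hence zy: "z = y + (c \<bullet> y) *\<^sub>R axis i 1" by (simp add: y_def)
    have "y \<noteq> 0" using z zy by auto
    hence "wnorm2 A y > 0" using A unfolding spd_def by blast
    thus "wnorm2 A' z > 0" using quad[of y] zy by simp
  qed
  then have symA': "transpose A' = A'" unfolding spd_def by blast
  define E :: "real^'d^'d" where "E = (\<chi> j k. (if j = k then 1 else 0) + (if j = i then c$k else 0))"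
  have Ey: "E *v y = y + (c \<bullet> y) *\<^sub>R axis i 1" for y
    by (simp add: E_def matrix_vector_mult_def vec_eq_iff axis_def inner_vec_def distrib_right sum.distrib
                  if_distrib[of "\<lambda>x. x * _"] cong: if_cong)
  have "A = transpose E ** A' ** E"
  proof (rule polarization)
    show "transpose A = A" using A unfolding spd_def by blast
    show "transpose (transpose E ** A' ** E) = transpose E ** A' ** E"
      by (simp add: matrix_transpose_mul symA' matrix_mul_assoc)
    fix y
    have "wnorm2 (transpose E ** A' ** E) y = wnorm2 A' (E *v y)"
      unfolding wnorm2_def matrix_vector_mul_assoc[symmetric] inner_transpose ..
    then show "wnorm2 A y = wnorm2 (transpose E ** A' ** E) y" unfolding Ey quad by simp
  qed
  moreover have "det E = 1"
  proof -
    have "c \<in> vec.span {row j (mat 1 :: real^'d^'d) |j. j \<noteq> i}"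
    proof -
      have "c = (\<Sum>j\<in>UNIV-{i}. c$j *s row j (mat 1 :: real^'d^'d))"
        by (simp add: vec_eq_iff row_def mat_def c_def sum.If_cases if_distrib cong: if_cong)
      also have "\<dots> \<in> vec.span {row j (mat 1 :: real^'d^'d) |j. j \<noteq> i}"
        by (intro vec.span_sum vec.span_scale vec.span_base) auto
      finally show ?thesis .
    qed
    from det_row_span[OF this]
    have "det (\<chi> k. if k = i then row i (mat 1 :: real^'d^'d) + c else row k (mat 1)) = 1" by simp
    moreover have "(\<chi> k. if k = i then row i (mat 1 :: real^'d^'d) + c else row k (mat 1)) = E"
      by (simp add: vec_eq_iff row_def mat_def E_def)
    ultimately show ?thesis by simp
  qed
  ultimately show "det A' = det A"
    by (simp add: det_mul det_transpose)
qed

lemma gauss_1d: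
  fixes a :: real assumes a: "a > 0"
  shows "(\<integral>\<^sup>+t. ennreal (exp (- (a * t\<^sup>2) / 2)) \<partial>lborel) = ennreal (sqrt (2 * pi / a))"
proof -
  define \<sigma> where "\<sigma> = 1 / sqrt a"
  have s2: "\<sigma>\<^sup>2 = 1 / a" using a by (simp add: \<sigma>_def power_divide)
  have e1: "2 * pi * \<sigma>\<^sup>2 = 2 * pi / a" by (simp add: s2)
  have e2: "-(t - 0)\<^sup>2 / (2 * \<sigma>\<^sup>2) = - (a * t\<^sup>2) / 2" for t
    using a by (simp add: s2)
  have nd: "normal_density 0 \<sigma> t = exp (- (a * t\<^sup>2) / 2) * (1 / sqrt (2 * pi / a))" for t
    unfolding normal_density_def e1 e2 by (simp only: mult.commute)
  have one: "(\<integral>\<^sup>+t. ennreal (normal_density 0 \<sigma> t) \<partial>lborel) = 1"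
  proof -
    have sp: "\<sigma> > 0" using a by (simp add: \<sigma>_def)
    have "(\<integral>\<^sup>+t. ennreal (normal_density 0 \<sigma> t) \<partial>lborel) = ennreal (\<integral>t. normal_density 0 \<sigma> t \<partial>lborel)"
      by (rule nn_integral_eq_integral[OF integrable_normal_density[OF sp]]) simp
    then show ?thesis using integral_normal_density[OF sp] by simp
  qed
  have m: "ennreal (exp (- (a * t\<^sup>2) / 2) * (1 / sqrt (2 * pi / a))) = ennreal (exp (- (a * t\<^sup>2) / 2)) * ennreal (1 / sqrt (2 * pi / a))" for t
    by (rule ennreal_mult) (use a in auto)
  have "(\<integral>\<^sup>+t. ennreal (exp (- (a * t\<^sup>2) / 2)) * ennreal (1 / sqrt (2 * pi / a)) \<partial>lborel) = 1"
    using one unfolding nd m .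
  hence "(\<integral>\<^sup>+t. ennreal (exp (- (a * t\<^sup>2) / 2)) \<partial>lborel) * ennreal (1 / sqrt (2 * pi / a)) = 1"
    by (subst (asm) nn_integral_multc) auto
  hence "(\<integral>\<^sup>+t. ennreal (exp (- (a * t\<^sup>2) / 2)) \<partial>lborel) * ennreal (1 / sqrt (2 * pi / a)) * ennreal (sqrt (2 * pi / a))
     = ennreal (sqrt (2 * pi / a))" by simp
  moreover have "ennreal (1 / sqrt (2 * pi / a)) * ennreal (sqrt (2 * pi / a)) = 1"
    using a by (simp add: ennreal_mult'[symmetric])
  ultimately show ?thesis by (simp add: mult.assoc)
qed

lemma Basis_vec_real: "(Basis :: (real^'d) set) = range (\<lambda>i. axis i 1)"
  unfolding Basis_vec_def by auto

lemma prod_Basis_vec: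
  fixes F :: "real^'d \<Rightarrow> 'b::comm_monoid_mult"
  shows "(\<Prod>b\<in>Basis. F b) = (\<Prod>i\<in>UNIV. F (axis i 1))"
  unfolding Basis_vec_real by (subst prod.reindex) (auto simp: inj_def axis_eq_axis)

lemma sqrt_prod: "(\<Prod>i\<in>A. sqrt (f i)) = sqrt (\<Prod>i\<in>A. f i)"
  by (induction A rule: infinite_finite_induct) (auto simp: real_sqrt_mult)

lemma gauss_diag:
  fixes A :: "real^'d^'d"
  assumes d: "\<And>i j. i \<noteq> j \<Longrightarrow> A$i$j = 0" and p: "\<And>i. A$i$i > 0"
  shows "(\<integral>\<^sup>+x. ennreal (exp (- wnorm2 A x / 2)) \<partial>lborel) = ennreal (sqrt ((2*pi)^CARD('d) / det A))"
proof -
  define f where "f b t = ennreal (exp (- ((b \<bullet> (A *v b)) * t\<^sup>2) / 2))" for b :: "real^'d" and t :: real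
  have inner: "(\<Sum>j\<in>UNIV. x$i * A$i$j * x$j) = A$i$i * (x$i)\<^sup>2" for x :: "real^'d" and i
    by (subst sum.remove[of _ i]) (auto simp: d power2_eq_square)
  have wq: "wnorm2 A x = (\<Sum>i\<in>UNIV. A$i$i * (x$i)\<^sup>2)" for x
    unfolding wnorm2_sum inner ..
  have bb: "axis i 1 \<bullet> (A *v axis i 1) = A$i$i" for i
    by (simp only: inner_axis' matrix_vector_mul_component inner_axis) simp
  have "(\<integral>\<^sup>+x. ennreal (exp (- wnorm2 A x / 2)) \<partial>lborel) = (\<integral>\<^sup>+x. (\<Prod>b\<in>Basis. f b (x \<bullet> b)) \<partial>lborel)"
  proof (rule nn_integral_cong)
    fix x :: "real^'d"
    have "(\<Prod>b\<in>Basis. f b (x \<bullet> b)) = (\<Prod>i\<in>UNIV. ennreal (exp (- (A$i$i * (x$i)\<^sup>2) / 2)))"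
      unfolding prod_Basis_vec f_def bb by (simp add: inner_axis)
    also have "\<dots> = ennreal (\<Prod>i\<in>UNIV. exp (- (A$i$i * (x$i)\<^sup>2) / 2))"
      by (simp add: prod_ennreal)
    also have "(\<Prod>i\<in>UNIV. exp (- (A$i$i * (x$i)\<^sup>2) / 2)) = exp (- wnorm2 A x / 2)"
      unfolding wq by (simp add: exp_sum[symmetric] sum_negf sum_divide_distrib)
    finally show "ennreal (exp (- wnorm2 A x / 2)) = (\<Prod>b\<in>Basis. f b (x \<bullet> b))" by simp
  qed
  also have "\<dots> = (\<Prod>b\<in>Basis. (\<integral>\<^sup>+t. f b t \<partial>lborel))"
    by (rule nn_integral_lborel_prod) (auto simp: f_def)
  also have "\<dots> = (\<Prod>i\<in>UNIV. ennreal (sqrt (2 * pi / A$i$i)))"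
    unfolding prod_Basis_vec f_def bb using gauss_1d[OF p] by simp
  also have "\<dots> = ennreal (\<Prod>i\<in>UNIV. sqrt (2 * pi / A$i$i))"
    by (rule prod_ennreal) (use p in \<open>auto intro: less_imp_le\<close>)
  also have "(\<Prod>i\<in>UNIV. sqrt (2 * pi / A$i$i)) = sqrt ((2*pi)^CARD('d) / det A)"
    unfolding sqrt_prod prod_dividef by (simp add: det_diagonal[OF d])
  finally show ?thesis .
qed

lemma wnorm2_meas[measurable]: "(\<lambda>z. wnorm2 A z) \<in> borel_measurable borel"
  unfolding wnorm2_def by (intro borel_measurable_continuous_onI continuous_intros linear_continuous_on
     matrix_vector_mul_linear bounded_linear_inner_right_comp) (simp add: linear_conv_bounded_linear[symmetric])

lemma gauss_spd:
  fixes A :: "real^'d^'d"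
  assumes "spd A"
  shows "det A > 0 \<and> (\<integral>\<^sup>+x. ennreal (exp (- wnorm2 A x / 2)) \<partial>lborel) = ennreal (sqrt ((2*pi)^CARD('d) / det A))"
proof -
  have "\<forall>A::real^'d^'d. spd A \<longrightarrow> (\<forall>j k. j \<noteq> k \<longrightarrow> (j \<notin> K \<or> k \<notin> K) \<longrightarrow> A$j$k = 0) \<longrightarrow>
      det A > 0 \<and> (\<integral>\<^sup>+x. ennreal (exp (- wnorm2 A x / 2)) \<partial>lborel) = ennreal (sqrt ((2*pi)^CARD('d) / det A))"
    if fin: "finite K" for K :: "'d set"
    using fin
  proof (induction K rule: finite_induct)
    case empty
    show ?case
    proof (intro allI impI)
      fix A :: "real^'d^'d" assume A: "spd A" and d: "\<forall>j k. j \<noteq> k \<longrightarrow> (j \<notin> {} \<or> k \<notin> {}) \<longrightarrow> A$j$k = 0"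
      have d': "\<And>j k. j \<noteq> k \<Longrightarrow> A$j$k = 0" using d by blast
      show "det A > 0 \<and> (\<integral>\<^sup>+x. ennreal (exp (- wnorm2 A x / 2)) \<partial>lborel) = ennreal (sqrt ((2*pi)^CARD('d) / det A))"
        using gauss_diag[OF d' spd_diag_pos[OF A]] det_diagonal[OF d'] spd_diag_pos[OF A]
        by (simp add: prod_pos)
    qed
  next
    case (insert i K)
    show ?case
    proof (intro allI impI)
      fix A :: "real^'d^'d" assume A: "spd A" and d: "\<forall>j k. j \<noteq> k \<longrightarrow> (j \<notin> insert i K \<or> k \<notin> insert i K) \<longrightarrow> A$j$k = 0"
      define c where "c \<equiv> (\<chi> j. if j = i then 0 else A$i$j / A$i$i)"
      define A' where "A' \<equiv> (\<chi> j k. if j = i \<and> k = i then A$i$i else if j = i \<or> k = i then 0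
                        else A$j$k - A$i$j * A$i$k / A$i$i)"
      note S = schur_step[OF A, where i=i, folded c_def A'_def]
      have d': "\<forall>j k. j \<noteq> k \<longrightarrow> (j \<notin> K \<or> k \<notin> K) \<longrightarrow> A'$j$k = 0"
        using d by (auto simp: A'_def)
      have IH: "det A' > 0 \<and> (\<integral>\<^sup>+x. ennreal (exp (- wnorm2 A' x / 2)) \<partial>lborel) = ennreal (sqrt ((2*pi)^CARD('d) / det A'))"
        using insert.IH S(3) d' by blast
      have "(\<integral>\<^sup>+x. ennreal (exp (- wnorm2 A x / 2)) \<partial>lborel)
          = (\<integral>\<^sup>+x. ennreal (exp (- wnorm2 A' (x + (c \<bullet> x) *\<^sub>R axis i 1) / 2)) \<partial>lborel)"
        by (simp only: S(1))
      also have "\<dots> = (\<integral>\<^sup>+x. ennreal (exp (- wnorm2 A' x / 2)) \<partial>lborel)"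
        by (rule shear_nn_integral[where f="\<lambda>x. ennreal (exp (- wnorm2 A' x / 2))"])
           (auto simp: inner_axis S(2))
      finally show "det A > 0 \<and> (\<integral>\<^sup>+x. ennreal (exp (- wnorm2 A x / 2)) \<partial>lborel) = ennreal (sqrt ((2*pi)^CARD('d) / det A))"
        using IH S(4) by simp
    qed
  qed
  from this[of UNIV] assms show ?thesis by simp
qed

lemma inv_props:
  fixes S :: "real^'d^'d"
  assumes S: "spd S"
  shows "S ** matrix_inv S = mat 1" "matrix_inv S ** S = mat 1" "spd (matrix_inv S)"
    "det S * det (matrix_inv S) = 1"
proof -
  have symS: "transpose S = S" using S unfolding spd_def by blast
  have "\<forall>x. S *v x = 0 \<longrightarrow> x = 0"
  proof (intro allI impI)
    fix x assume "S *v x = 0"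
    hence "wnorm2 S x = 0" by (simp add: wnorm2_def)
    thus "x = 0" using S unfolding spd_def by (metis less_irrefl)
  qed
  then obtain B where "B ** S = mat 1" using matrix_left_invertible_ker by blast
  hence "S ** B = mat 1 \<and> B ** S = mat 1" using matrix_left_right_inverse by blast
  hence "\<exists>B. S ** B = mat 1 \<and> B ** S = mat 1" by blast
  from someI_ex[OF this] have inv: "S ** matrix_inv S = mat 1" "matrix_inv S ** S = mat 1"
    unfolding matrix_inv_def by blast+
  then show "S ** matrix_inv S = mat 1" "matrix_inv S ** S = mat 1" by blast+
  define B where "B = matrix_inv S"
  have SB: "S ** B = mat 1" and BS: "B ** S = mat 1" using inv by (simp_all add: B_def)
  have "transpose B ** S = mat 1"
    using arg_cong[OF SB, of transpose] by (simp add: matrix_transpose_mul symS)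
  hence "transpose B = B"
    by (metis BS SB matrix_mul_assoc matrix_mul_lid matrix_mul_rid)
  moreover have "wnorm2 B x > 0" if x: "x \<noteq> 0" for x
  proof -
    define y where "y = B *v x"
    have xy: "x = S *v y" by (simp add: y_def matrix_vector_mul_assoc SB)
    have "y \<noteq> 0" using x xy by auto
    hence "wnorm2 S y > 0" using S unfolding spd_def by blast
    moreover have "wnorm2 B x = wnorm2 S y"
    proof -
      have "wnorm2 B x = x \<bullet> y" by (simp add: wnorm2_def y_def)
      also have "\<dots> = y \<bullet> (S *v y)" by (subst xy) (rule inner_commute)
      finally show ?thesis by (simp add: wnorm2_def)
    qed
    ultimately show ?thesis by simp
  qed
  ultimately show "spd (matrix_inv S)" unfolding spd_def B_def[symmetric] by blast
  show "det S * det (matrix_inv S) = 1"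
  proof -
    have "det S * det (matrix_inv S) = det (S ** matrix_inv S)" by (rule det_mul[symmetric])
    also have "\<dots> = 1" by (simp only: inv(1) det_I)
    finally show ?thesis .
  qed
qed

lemma nn_integral_translate:
  fixes f :: "'a::euclidean_space \<Rightarrow> ennreal"
  assumes [measurable]: "f \<in> borel_measurable borel"
  shows "(\<integral>\<^sup>+x. f (x - m) \<partial>lborel) = (\<integral>\<^sup>+x. f x \<partial>lborel)"
proof -
  have "(\<integral>\<^sup>+x. f x \<partial>lborel) = (\<integral>\<^sup>+x. f x \<partial>distr lborel borel ((+) (-m)))"
    by (simp add: lborel_distr_plus)
  also have "\<dots> = (\<integral>\<^sup>+x. f (-m + x) \<partial>lborel)"
    by (subst nn_integral_distr) auto
  finally show ?thesis by simp
qed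

lemma mvn_density_alt:
  "mvn_density mu S x = exp (- wnorm2 (matrix_inv S) (x - mu) / 2) / sqrt ((2 * pi) ^ CARD('d) * det S)"
  for S :: "real^'d^'d"
  unfolding mvn_density_def wnorm2_def inner_minus_left by simp

lemma mvn_density_meas[measurable]: "mvn_density mu S \<in> borel_measurable borel"
  unfolding mvn_density_alt by measurable

lemma spd_det_pos: "spd S \<Longrightarrow> det S > 0"
  using gauss_spd by blast

lemma mvn_density_nonneg: "spd S \<Longrightarrow> mvn_density mu S x \<ge> 0"
  unfolding mvn_density_alt using spd_det_pos[of S] by simp

lemma mvn_total:
  fixes S :: "real^'d^'d"
  assumes S: "spd S"
  shows "(\<integral>\<^sup>+x. ennreal (mvn_density mu S x) \<partial>lborel) = 1"
proof -
  define A where "A = matrix_inv S"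
  note I = inv_props[OF S, folded A_def]
  note G = gauss_spd[OF I(3)]
  define C where "C = sqrt ((2 * pi) ^ CARD('d) * det S)"
  have dA: "det A > 0" using G by blast
  have GI: "(\<integral>\<^sup>+x. ennreal (exp (- wnorm2 A x / 2)) \<partial>lborel) = ennreal (sqrt ((2*pi)^CARD('d) / det A))"
    using G by blast
  have dS: "det S = 1 / det A" using I(4) dA by (simp add: eq_divide_eq)
  have C: "C = sqrt ((2*pi)^CARD('d) / det A)" unfolding C_def dS by (simp add: divide_inverse)
  have Cp: "C > 0" unfolding C using dA by simp
  have "(\<integral>\<^sup>+x. ennreal (mvn_density mu S x) \<partial>lborel)
      = (\<integral>\<^sup>+x. ennreal (exp (- wnorm2 A (x - mu) / 2)) * ennreal (1 / C) \<partial>lborel)"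
    unfolding mvn_density_alt A_def[symmetric] C_def[symmetric]
  proof (intro nn_integral_cong)
    fix x
    have "exp (- wnorm2 A (x - mu) / 2) / C = exp (- wnorm2 A (x - mu) / 2) * (1 / C)" by simp
    also have "ennreal \<dots> = ennreal (exp (- wnorm2 A (x - mu) / 2)) * ennreal (1 / C)"
      by (rule ennreal_mult'') (use Cp in simp)
    finally show "ennreal (exp (- wnorm2 A (x - mu) / 2) / C) = ennreal (exp (- wnorm2 A (x - mu) / 2)) * ennreal (1 / C)" .
  qed
  also have "\<dots> = (\<integral>\<^sup>+x. ennreal (exp (- wnorm2 A (x - mu) / 2)) \<partial>lborel) * ennreal (1 / C)"
    by (rule nn_integral_multc) measurable
  also have "(\<integral>\<^sup>+x. ennreal (exp (- wnorm2 A (x - mu) / 2)) \<partial>lborel) = ennreal C"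
    using nn_integral_translate[of "\<lambda>x. ennreal (exp (- wnorm2 A x / 2))" mu] GI C by simp
  also have "ennreal C * ennreal (1 / C) = ennreal (C * (1 / C))"
    by (rule ennreal_mult''[symmetric]) (use Cp in simp)
  also have "C * (1 / C) = 1" using Cp by simp
  finally show ?thesis by simp
qed

lemma prob_space_mvn: "spd S \<Longrightarrow> prob_space (mvn mu S)"
  unfolding mvn_def
  by (rule prob_spaceI) (simp add: emeasure_density mvn_total)

lemma mgf_identity:
  fixes S :: "real^'d^'d"
  assumes S: "spd S"
  shows "mvn_density mu S x * exp (l * (u \<bullet> (x - mu)))
       = exp (l\<^sup>2 * wnorm2 S u / 2) * mvn_density (mu + l *\<^sub>R (S *v u)) S x"
proof -
  define A where "A = matrix_inv S"
  note I = inv_props[OF S, folded A_def]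
  have symA: "transpose A = A" using I(3) unfolding spd_def by blast
  have symS: "transpose S = S" using S unfolding spd_def by blast
  define w where "w = x - mu"
  define m where "m = l *\<^sub>R (S *v u)"
  have e1: "w \<bullet> (A *v m) = l * (u \<bullet> w)"
    by (simp add: m_def matrix_vector_mult_scaleR matrix_vector_mul_assoc I(2) inner_commute)
  have e2: "m \<bullet> (A *v w) = l * (u \<bullet> w)"
    using e1 by (metis inner_commute inner_transpose symA)
  have e3: "m \<bullet> (A *v m) = l\<^sup>2 * wnorm2 S u"
    unfolding wnorm2_def using e1[of] 
    by (simp add: m_def matrix_vector_mult_scaleR matrix_vector_mul_assoc I(2) power2_eq_square)
       (metis inner_commute inner_transpose symS)
  have q: "wnorm2 A (w - m) = wnorm2 A w - 2 * l * (u \<bullet> w) + l\<^sup>2 * wnorm2 S u"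
    unfolding wnorm2_def by (simp add: matrix_vector_mult_diff_distrib inner_diff_left inner_diff_right e1 e2 e3[unfolded wnorm2_def])
  have xm: "x - (mu + m) = w - m" by (simp add: w_def)
  show ?thesis
    unfolding mvn_density_alt A_def[symmetric] m_def[symmetric] xm w_def[symmetric] q
    by (simp add: exp_add[symmetric] exp_diff field_simps)
qed

lemma sets_mvn[measurable_cong, simp]: "sets (mvn mu S) = sets borel"
  by (simp add: mvn_def)

lemma space_mvn[simp]: "space (mvn mu S) = UNIV"
  by (simp add: mvn_def)

lemma wnorm2_uminus[simp]: "wnorm2 A (- x) = wnorm2 A x"
  by (simp add: wnorm2_sum)

lemma mgf_mvn:
  fixes S :: "real^'d^'d"
  assumes S: "spd S"
  shows "(\<integral>\<^sup>+x. ennreal (exp (l * (u \<bullet> (x - mu)))) \<partial>mvn mu S) = ennreal (exp (l\<^sup>2 * wnorm2 S u / 2))"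
proof -
  have "(\<integral>\<^sup>+x. ennreal (exp (l * (u \<bullet> (x - mu)))) \<partial>mvn mu S)
      = (\<integral>\<^sup>+x. ennreal (mvn_density mu S x) * ennreal (exp (l * (u \<bullet> (x - mu)))) \<partial>lborel)"
    unfolding mvn_def by (rule nn_integral_density) measurable
  also have "\<dots> = (\<integral>\<^sup>+x. ennreal (exp (l\<^sup>2 * wnorm2 S u / 2)) * ennreal (mvn_density (mu + l *\<^sub>R (S *v u)) S x) \<partial>lborel)"
  proof (rule nn_integral_cong)
    fix x
    have "ennreal (mvn_density mu S x) * ennreal (exp (l * (u \<bullet> (x - mu))))
        = ennreal (mvn_density mu S x * exp (l * (u \<bullet> (x - mu))))"
      by (rule ennreal_mult[symmetric]) (auto simp: mvn_density_nonneg[OF S])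
    also have "\<dots> = ennreal (exp (l\<^sup>2 * wnorm2 S u / 2) * mvn_density (mu + l *\<^sub>R (S *v u)) S x)"
      by (simp only: mgf_identity[OF S])
    also have "\<dots> = ennreal (exp (l\<^sup>2 * wnorm2 S u / 2)) * ennreal (mvn_density (mu + l *\<^sub>R (S *v u)) S x)"
      by (rule ennreal_mult) (auto simp: mvn_density_nonneg[OF S])
    finally show "ennreal (mvn_density mu S x) * ennreal (exp (l * (u \<bullet> (x - mu)))) =
      ennreal (exp (l\<^sup>2 * wnorm2 S u / 2)) * ennreal (mvn_density (mu + l *\<^sub>R (S *v u)) S x)" .
  qed
  also have "\<dots> = ennreal (exp (l\<^sup>2 * wnorm2 S u / 2)) * (\<integral>\<^sup>+x. ennreal (mvn_density (mu + l *\<^sub>R (S *v u)) S x) \<partial>lborel)"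
    by (rule nn_integral_cmult) measurable
  also have "\<dots> = ennreal (exp (l\<^sup>2 * wnorm2 S u / 2))"
    by (simp add: mvn_total[OF S])
  finally show ?thesis .
qed

lemma prod_two:
  fixes F G :: "'b::comm_monoid_mult"
  assumes "finite I" "a \<in> I" "j \<in> I" "a \<noteq> j"
  shows "(\<Prod>k\<in>I. if k = j then F else if k = a then G else 1) = F * G"
proof -
  have "(\<Prod>k\<in>I. if k = j then F else if k = a then G else 1)
      = F * (\<Prod>k\<in>I-{j}. if k = j then F else if k = a then G else 1)"
    using assms by (subst prod.remove[of _ j]) auto
  also have "(\<Prod>k\<in>I-{j}. if k = j then F else if k = a then G else 1)
      = G * (\<Prod>k\<in>I-{j}-{a}. if k = j then F else if k = a then G else 1)"
    using assms by (subst prod.remove[of _ a]) auto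
  also have "(\<Prod>k\<in>I-{j}-{a}. if k = j then F else if k = a then G else 1) = 1"
    by (rule prod.neutral) auto
  finally show ?thesis by simp
qed

lemma pair_tail:
  fixes S :: "real^'d^'d" and xa xj mu :: "real^'d" and I :: "'i set"
  assumes S: "spd S" and I: "finite I" "a \<in> I" "j \<in> I" "a \<noteq> j"
    and s0: "s0 \<ge> 0" and mu: "(xj - xa) \<bullet> mu \<le> - s0"
    and tau: "wnorm2 S xj + wnorm2 S xa > 0"
  defines "M \<equiv> PiM I (\<lambda>_. mvn mu S)"
  shows "emeasure M {bt \<in> space M. xa \<bullet> bt a \<le> xj \<bullet> bt j}
           \<le> ennreal (exp (- s0\<^sup>2 / (2 * (wnorm2 S xj + wnorm2 S xa))))"
proof -
  define T where "T = wnorm2 S xj + wnorm2 S xa"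
  define l where "l = s0 / T"
  have T: "T > 0" using tau by (simp add: T_def)
  have l: "l \<ge> 0" using s0 T by (simp add: l_def)
  interpret P: prob_space "mvn mu S" by (rule prob_space_mvn[OF S])
  interpret PS: product_sigma_finite "\<lambda>_::'i. mvn mu S" by standard
  define E where "E = {bt \<in> space M. xa \<bullet> bt a \<le> xj \<bullet> bt j}"
  have Em: "E \<in> sets M" unfolding E_def M_def using I by measurable
  define g where "g k = (if k = j then (\<lambda>y. exp (l * (xj \<bullet> (y - mu))))
      else if k = a then (\<lambda>y. exp (l * ((- xa) \<bullet> (y - mu)))) else (\<lambda>y. 1))" for k
  have gm: "g k \<in> borel_measurable (mvn mu S)" for k
  proof -
    have "(\<lambda>y. exp (l * (xj \<bullet> (y - mu)))) \<in> borel_measurable (mvn mu S)"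
         "(\<lambda>y. exp (l * ((- xa) \<bullet> (y - mu)))) \<in> borel_measurable (mvn mu S)"
         "(\<lambda>y. 1::real) \<in> borel_measurable (mvn mu S)" by measurable
    then show ?thesis unfolding g_def by simp
  qed
  have gmP: "(\<lambda>bt. \<Prod>k\<in>I. g k (bt k)) \<in> borel_measurable M"
    unfolding M_def
  proof (intro borel_measurable_prod)
    fix k assume k: "k \<in> I"
    have "(\<lambda>bt. bt k) \<in> PiM I (\<lambda>_. mvn mu S) \<rightarrow>\<^sub>M mvn mu S"
      by (rule measurable_component_singleton[OF k])
    from measurable_compose[OF this gm]
    show "(\<lambda>bt. g k (bt k)) \<in> borel_measurable (PiM I (\<lambda>_. mvn mu S))" .
  qed
  have ind: "indicator E bt \<le> ennreal (exp (- l * s0)) * ennreal (\<Prod>k\<in>I. g k (bt k))" for bt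
  proof -
    have pg: "(\<Prod>k\<in>I. g k (bt k)) = exp (l * (xj \<bullet> (bt j - mu))) * exp (l * ((- xa) \<bullet> (bt a - mu)))"
    proof -
      have "(\<Prod>k\<in>I. g k (bt k)) = (\<Prod>k\<in>I. if k = j then exp (l * (xj \<bullet> (bt j - mu)))
          else if k = a then exp (l * ((- xa) \<bullet> (bt a - mu))) else 1)"
        by (rule prod.cong) (auto simp: g_def)
      also have "\<dots> = exp (l * (xj \<bullet> (bt j - mu))) * exp (l * ((- xa) \<bullet> (bt a - mu)))"
        by (rule prod_two[OF I])
      finally show ?thesis .
    qed
    have "exp (- l * s0) * (\<Prod>k\<in>I. g k (bt k))
        = exp (l * ((xj \<bullet> bt j - xa \<bullet> bt a) - (xj - xa) \<bullet> mu - s0))"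
      unfolding pg by (simp add: exp_add[symmetric] inner_diff_right inner_diff_left algebra_simps)
    moreover have "exp (l * ((xj \<bullet> bt j - xa \<bullet> bt a) - (xj - xa) \<bullet> mu - s0)) \<ge> 1" if "bt \<in> E"
    proof -
      have "(xj \<bullet> bt j - xa \<bullet> bt a) - (xj - xa) \<bullet> mu - s0 \<ge> 0" using that mu by (auto simp: E_def)
      with l show ?thesis by simp
    qed
    ultimately show ?thesis
      by (cases "bt \<in> E") (auto simp: ennreal_mult[symmetric] prod_nonneg g_def)
  qed
  have "emeasure M E = (\<integral>\<^sup>+bt. indicator E bt \<partial>M)" using Em by simp
  also have "\<dots> \<le> (\<integral>\<^sup>+bt. ennreal (exp (- l * s0)) * ennreal (\<Prod>k\<in>I. g k (bt k)) \<partial>M)"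
    by (rule nn_integral_mono) (rule ind)
  also have "\<dots> = ennreal (exp (- l * s0)) * (\<integral>\<^sup>+bt. ennreal (\<Prod>k\<in>I. g k (bt k)) \<partial>M)"
    by (rule nn_integral_cmult) (use gmP in measurable)
  also have "(\<integral>\<^sup>+bt. ennreal (\<Prod>k\<in>I. g k (bt k)) \<partial>M) = (\<integral>\<^sup>+bt. (\<Prod>k\<in>I. ennreal (g k (bt k))) \<partial>M)"
    by (intro nn_integral_cong prod_ennreal[symmetric]) (simp add: g_def)
  also have "(\<integral>\<^sup>+bt. (\<Prod>k\<in>I. ennreal (g k (bt k))) \<partial>M) = (\<Prod>k\<in>I. (\<integral>\<^sup>+y. ennreal (g k y) \<partial>mvn mu S))"
    unfolding M_def by (rule PS.product_nn_integral_prod[OF I(1)]) (use gm in measurable)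
  also have "\<dots> = (\<Prod>k\<in>I. if k = j then ennreal (exp (l\<^sup>2 * wnorm2 S xj / 2))
                 else if k = a then ennreal (exp (l\<^sup>2 * wnorm2 S xa / 2)) else 1)"
    using mgf_mvn[OF S, where l=l and u="- xa" and mu=mu]
    by (intro prod.cong) (auto simp: g_def mgf_mvn[OF S] P.emeasure_space_1[simplified])
  also have "\<dots> = ennreal (exp (l\<^sup>2 * wnorm2 S xj / 2)) * ennreal (exp (l\<^sup>2 * wnorm2 S xa / 2))"
    by (rule prod_two[OF I])
  also have "ennreal (exp (- l * s0)) * \<dots> = ennreal (exp (- l * s0 + l\<^sup>2 * T / 2))"
    by (simp add: ennreal_mult[symmetric] exp_add[symmetric] T_def add_divide_distrib distrib_left)
  also have "- l * s0 + l\<^sup>2 * T / 2 = - s0\<^sup>2 / (2 * T)"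
    using T by (simp add: l_def power2_eq_square field_simps)
  finally show ?thesis by (simp add: E_def T_def)
qed

lemma wnorm2_add_mat: "wnorm2 (A + B) x = wnorm2 A x + wnorm2 B x"
  by (simp add: wnorm2_def matrix_vector_mult_add_rdistrib inner_add_right)

lemma wnorm2_sum_mat: "wnorm2 (sum f S) x = (\<Sum>i\<in>S. wnorm2 (f i) x)"
  by (induction S rule: infinite_finite_induct) (simp_all add: wnorm2_add_mat, simp_all add: wnorm2_def)

lemma wnorm2_outer: "wnorm2 (outer y) x = (y \<bullet> x)\<^sup>2"
  unfolding wnorm2_sum outer_def power2_eq_square inner_vec_def sum_product
  by (intro sum.cong refl) (simp add: algebra_simps)

lemma wnorm2_scale: "wnorm2 (c *\<^sub>R A) x = c * wnorm2 A x"
  by (simp add: wnorm2_def scaleR_matrix_vector_assoc[symmetric])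

lemma transpose_add_mat: "transpose (A + B) = transpose A + transpose B"
  by (simp add: transpose_def vec_eq_iff)

lemma transpose_sum_mat: "transpose (sum f S) = (\<Sum>i\<in>S. transpose (f i))"
  by (induction S rule: infinite_finite_induct) (simp_all add: transpose_add_mat, simp_all add: transpose_def vec_eq_iff)

lemma transpose_outer: "transpose (outer y) = outer y"
  by (simp add: transpose_def outer_def vec_eq_iff mult.commute)

lemma spd_nonneg: "spd A \<Longrightarrow> wnorm2 A x \<ge> 0"
  unfolding spd_def by (cases "x = 0") (auto simp: wnorm2_def intro: less_imp_le)

lemma spd_zero: "spd A \<Longrightarrow> wnorm2 A x = 0 \<Longrightarrow> x = 0"
  unfolding spd_def by (metis less_irrefl)

lemma V_spd:
  fixes X :: "'a \<Rightarrow> 'b \<Rightarrow> real^'d"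
  assumes lam: "lam > 0"
  shows "spd ((\<Sum>tau\<in>T. \<Sum>i\<in>K. outer (X tau i)) + lam *\<^sub>R mat 1)"
  unfolding spd_def
proof (intro conjI allI impI)
  show "transpose ((\<Sum>tau\<in>T. \<Sum>i\<in>K. outer (X tau i)) + lam *\<^sub>R mat 1) = (\<Sum>tau\<in>T. \<Sum>i\<in>K. outer (X tau i)) + lam *\<^sub>R mat 1"
    by (simp add: transpose_add_mat transpose_sum_mat transpose_outer transpose_scalar)
  fix x :: "real^'d" assume x: "x \<noteq> 0"
  have "wnorm2 ((\<Sum>tau\<in>T. \<Sum>i\<in>K. outer (X tau i)) + lam *\<^sub>R mat 1) x
      = (\<Sum>tau\<in>T. \<Sum>i\<in>K. (X tau i \<bullet> x)\<^sup>2) + lam * (x \<bullet> x)"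
    by (simp add: wnorm2_add_mat wnorm2_sum_mat wnorm2_outer wnorm2_scale) (simp add: wnorm2_def)
  also have "\<dots> > 0"
    using lam x by (intro add_nonneg_pos sum_nonneg) auto
  finally show "wnorm2 ((\<Sum>tau\<in>T. \<Sum>i\<in>K. outer (X tau i)) + lam *\<^sub>R mat 1) x > 0" .
qed

lemma spd_scale: "spd A \<Longrightarrow> c > 0 \<Longrightarrow> spd (c *\<^sub>R A)"
  unfolding spd_def by (simp add: transpose_scalar wnorm2_scale)

lemma argmax_prop:
  assumes "N \<ge> 1"
  shows "argmax_arm N f < N \<and> (\<forall>j<N. f j \<le> f (argmax_arm N f))"
proof -
  have "\<exists>i<N. \<forall>j<N. f j \<le> f i" using assms
  proof (induction N)
    case 0 then show ?case by simp
  next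
    case (Suc n)
    show ?case
    proof (cases "n = 0")
      case True then show ?thesis by auto
    next
      case False
      then obtain i where i: "i < n" "\<forall>j<n. f j \<le> f i" using Suc by auto
      show ?thesis
      proof (cases "f n \<le> f i")
        case True
        have "\<forall>j<Suc n. f j \<le> f i"
        proof (intro allI impI)
          fix j assume "j < Suc n"
          then consider "j < n" | "j = n" by linarith
          then show "f j \<le> f i" using i True by cases auto
        qed
        then show ?thesis using i(1) by (intro exI[of _ i]) simp
      next
        case False
        have "\<forall>j<Suc n. f j \<le> f n"
        proof (intro allI impI)
          fix j assume "j < Suc n"
          then consider "j < n" | "j = n" by linarith
          then show "f j \<le> f n"
          proof cases
            case 1 then have "f j \<le> f i" using i by simp
            then show ?thesis using False by simp
          qed simp
        qed
        then show ?thesis by (intro exI[of _ n]) simp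
      qed
    qed
  qed
  then show ?thesis unfolding argmax_arm_def by (rule LeastI_ex)
qed

lemma argmax_meas:
  fixes X :: "nat \<Rightarrow> real^'d"
  shows "(\<lambda>bt. argmax_arm N (\<lambda>i. X i \<bullet> bt i)) \<in> measurable (PiM {..<N} (\<lambda>_. mvn mu S)) (count_space UNIV)"
  unfolding argmax_arm_def
proof (rule measurable_Least)
  fix i
  let ?M = "PiM {..<N} (\<lambda>_. mvn mu S)"
  show "Measurable.pred ?M (\<lambda>bt. i < N \<and> (\<forall>j<N. X j \<bullet> bt j \<le> X i \<bullet> bt i))"
  proof (cases "i < N")
    case True
    have "{bt \<in> space ?M. \<forall>j\<in>{..<N}. X j \<bullet> bt j \<le> X i \<bullet> bt i} \<in> sets ?M"
    proof (rule sets.sets_Collect_finite_All)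
      fix j assume j: "j \<in> {..<N}"
      have i: "i \<in> {..<N}" using True by simp
      have c: "(\<lambda>x::real^'d. X k \<bullet> x) \<in> borel_measurable (mvn mu S)" for k by measurable
      have "(\<lambda>bt. X j \<bullet> bt j) \<in> borel_measurable ?M"
        using measurable_compose[OF measurable_component_singleton[OF j] c] .
      moreover have "(\<lambda>bt. X i \<bullet> bt i) \<in> borel_measurable ?M"
        using measurable_compose[OF measurable_component_singleton[OF i] c] .
      ultimately show "{bt \<in> space ?M. X j \<bullet> bt j \<le> X i \<bullet> bt i} \<in> sets ?M"
        by (rule borel_measurable_le)
    qed simp
    moreover have "{bt \<in> space ?M. i < N \<and> (\<forall>j<N. X j \<bullet> bt j \<le> X i \<bullet> bt i)}
        = {bt \<in> space ?M. \<forall>j\<in>{..<N}. X j \<bullet> bt j \<le> X i \<bullet> bt i}" using True by auto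
    ultimately show ?thesis by (intro iffD2[OF Measurable.pred_def]) (simp only:)
  next
    case False
    then have "(\<lambda>bt. i < N \<and> (\<forall>j<N. X j \<bullet> bt j \<le> X i \<bullet> bt i)) = (\<lambda>bt. False)" by simp
    then show ?thesis by (simp only:) (rule measurable_const, simp)
  qed
qed

lemma comp_le_meas:
  fixes xa xj :: "real^'d"
  assumes "a \<in> I" "j \<in> I"
  shows "{bt \<in> space (PiM I (\<lambda>_. mvn mu S)). xa \<bullet> bt a \<le> xj \<bullet> bt j} \<in> sets (PiM I (\<lambda>_. mvn mu S))"
proof -
  have c: "(\<lambda>x::real^'d. y \<bullet> x) \<in> borel_measurable (mvn mu S)" for y by measurable
  have "(\<lambda>bt. xa \<bullet> bt a) \<in> borel_measurable (PiM I (\<lambda>_. mvn mu S))"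
    using measurable_compose[OF measurable_component_singleton[OF assms(1)] c] .
  moreover have "(\<lambda>bt. xj \<bullet> bt j) \<in> borel_measurable (PiM I (\<lambda>_. mvn mu S))"
    using measurable_compose[OF measurable_component_singleton[OF assms(2)] c] .
  ultimately show ?thesis by (rule borel_measurable_le)
qed

theorem lemma1:
  fixes N :: nat and t :: nat and lam :: real and gamma :: real
    and X :: "nat \<Rightarrow> nat \<Rightarrow> real ^ 'd"  \<comment> \<open>X tau i = context of arm i at round tau\<close>
    and beta betahat :: "real ^ 'd"
  assumes t: "t \<ge> 1"
    and lam: "lam > 0"
    and ctx_bdd: "\<And>i. i < N \<Longrightarrow> norm (X t i) \<le> 1"
    and gamma: "1 / real (N + 1) \<le> gamma" "gamma < 1 / real N"
  defines "V \<equiv> (\<Sum>tau\<in>{1..<t}. \<Sum>i<N. outer (X tau i)) + lam *\<^sub>R mat 1"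
    and "v \<equiv> 1 / sqrt (2 * ln (real N / (1 - gamma * real N)))"
  defines "astar \<equiv> argmax_arm N (\<lambda>i. X t i \<bullet> beta)"
  defines "Delta \<equiv> (\<lambda>i. X t astar \<bullet> beta - X t i \<bullet> beta)"
  defines "Nt \<equiv> {i. i < N \<and> Delta i \<le> 2 * norm (betahat - beta)
                 + sqrt (wnorm2 (matrix_inv V) (X t astar) + wnorm2 (matrix_inv V) (X t i))}"
  defines "M \<equiv> PiM {..<N} (\<lambda>_. mvn betahat ((v\<^sup>2) *\<^sub>R matrix_inv V))"
  shows "measure M {bt \<in> space M. argmax_arm N (\<lambda>i. X t i \<bullet> bt i) \<in> Nt} \<ge> 1 - gamma"
proof -
  have N1: "N \<ge> 1"
  proof (rule ccontr)
    assume "\<not> N \<ge> 1" then have N0: "N = 0" by simp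
    have "1 / real (N + 1) = 1" unfolding N0 by simp
    moreover have "1 / real N = 0" unfolding N0 by simp
    ultimately show False using gamma by linarith
  qed
  have Npos: "real N > 0" using N1 by simp
  have gpos: "gamma > 0"
  proof -
    have "1 / real (N + 1) > 0" by simp
    then show ?thesis using gamma(1) by linarith
  qed
  have gN: "gamma * real N < 1" using gamma(2) Npos by (simp add: field_simps)
  have g1: "gamma * (real N + 1) \<ge> 1" using gamma(1) by (simp add: field_simps)
  define q where "q = real N / (1 - gamma * real N)"
  have q1: "q > 1"
  proof -
    have "gamma * real N > 0" using gpos Npos by simp
    moreover have "real N \<ge> 1" using N1 by simp
    ultimately have "real N > 1 - gamma * real N" by linarith
    then show ?thesis unfolding q_def using gN by (simp add: field_simps)
  qed
  have lnq: "ln q > 0" using q1 by simp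
  have v: "v = 1 / sqrt (2 * ln q)" unfolding v_def q_def ..
  have vpos: "v > 0" unfolding v using lnq by simp
  have v2: "v\<^sup>2 = 1 / (2 * ln q)" unfolding v using lnq by (simp add: power_divide)
  have expv: "exp (- 1 / (2 * v\<^sup>2)) = (1 - gamma * real N) / real N"
  proof -
    have "- 1 / (2 * v\<^sup>2) = - ln q" unfolding v2 using lnq by simp
    then have "exp (- 1 / (2 * v\<^sup>2)) = 1 / q" using q1 by (simp add: exp_minus inverse_eq_divide)
    then show ?thesis unfolding q_def by simp
  qed
  have Vspd: "spd V" unfolding V_def by (rule V_spd[OF lam])
  define Vi where "Vi = matrix_inv V"
  have Vi: "spd Vi" using inv_props(3)[OF Vspd] by (simp add: Vi_def)
  define S where "S = v\<^sup>2 *\<^sub>R Vi"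
  have Sspd: "spd S" unfolding S_def by (rule spd_scale[OF Vi]) (use vpos in simp)
  have MS: "M = PiM {..<N} (\<lambda>_. mvn betahat S)" unfolding M_def S_def Vi_def ..
  interpret P: prob_space M unfolding MS by (rule prob_space_PiM) (rule prob_space_mvn[OF Sspd])
  define g where "g bt = argmax_arm N (\<lambda>i. X t i \<bullet> bt i)" for bt :: "nat \<Rightarrow> real^'d"
  have gmeas: "g \<in> measurable M (count_space UNIV)" unfolding MS g_def by (rule argmax_meas)
  have amax: "astar < N \<and> (\<forall>j<N. X t j \<bullet> beta \<le> X t astar \<bullet> beta)"
    unfolding astar_def by (rule argmax_prop[OF N1])
  have nnw: "wnorm2 Vi x \<ge> 0" for x by (rule spd_nonneg[OF Vi])
  have Nt': "Nt = {i. i < N \<and> Delta i \<le> 2 * norm (betahat - beta)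
                 + sqrt (wnorm2 Vi (X t astar) + wnorm2 Vi (X t i))}" unfolding Nt_def Vi_def ..
  have aNt: "astar \<in> Nt" unfolding Nt' Delta_def using amax nnw by (simp add: add_nonneg_nonneg)
  define J where "J = {j. j < N \<and> j \<notin> Nt}"
  have J: "J \<subseteq> {..<N} - {astar}" using aNt by (auto simp: J_def)
  have finJ: "finite J" using J finite_subset by blast
  have cardJ: "card J \<le> N - 1"
  proof -
    have "card J \<le> card ({..<N} - {astar})" by (rule card_mono[OF _ J]) simp
    also have "\<dots> = N - 1" using amax by simp
    finally show ?thesis .
  qed
  define E where "E j = {bt \<in> space M. X t astar \<bullet> bt astar \<le> X t j \<bullet> bt j}" for j
  have Em: "E j \<in> sets M" if "j < N" for j
    unfolding E_def MS by (rule comp_le_meas) (use that amax in auto)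
  have Ebound: "measure M (E j) \<le> (1 - gamma * real N) / real N" if jJ: "j \<in> J" for j
  proof -
    have j: "j < N" "j \<notin> Nt" "j \<noteq> astar" using jJ aNt by (auto simp: J_def)
    define s0 where "s0 = sqrt (wnorm2 Vi (X t astar) + wnorm2 Vi (X t j))"
    have s0nn: "s0 \<ge> 0" unfolding s0_def using nnw by simp
    have Dj: "Delta j > 2 * norm (betahat - beta) + s0" using j unfolding Nt' s0_def by auto
    have cs: "(X t j - X t astar) \<bullet> (betahat - beta) \<le> 2 * norm (betahat - beta)"
    proof -
      have "(X t j - X t astar) \<bullet> (betahat - beta) \<le> norm (X t j - X t astar) * norm (betahat - beta)"
        by (rule norm_cauchy_schwarz)
      also have "norm (X t j - X t astar) \<le> 2"
        using norm_triangle_ineq4[of "X t j" "X t astar"] ctx_bdd[of j] ctx_bdd[of astar] j amax by simp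
      hence "norm (X t j - X t astar) * norm (betahat - beta) \<le> 2 * norm (betahat - beta)"
        by (rule mult_right_mono) simp
      finally show ?thesis .
    qed
    have mu: "(X t j - X t astar) \<bullet> betahat \<le> - s0"
    proof -
      have "(X t j - X t astar) \<bullet> betahat = - Delta j + (X t j - X t astar) \<bullet> (betahat - beta)"
        unfolding Delta_def by (simp add: inner_diff_left inner_diff_right)
      then show ?thesis using cs Dj by linarith
    qed
    have s0pos: "s0 > 0"
    proof (rule ccontr)
      assume "\<not> s0 > 0"
      then have "s0 = 0" using s0nn by simp
      then have "wnorm2 Vi (X t astar) + wnorm2 Vi (X t j) = 0" unfolding s0_def using nnw
        by (simp add: add_nonneg_nonneg)
      then have "wnorm2 Vi (X t astar) = 0" "wnorm2 Vi (X t j) = 0"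
        using nnw[of "X t astar"] nnw[of "X t j"] by linarith+
      then have "X t astar = 0" "X t j = 0" using spd_zero[OF Vi] by blast+
      then have "Delta j = 0" unfolding Delta_def by simp
      then show False using Dj \<open>s0 = 0\<close> by simp
    qed
    have tau: "wnorm2 S (X t j) + wnorm2 S (X t astar) = v\<^sup>2 * s0\<^sup>2"
      unfolding S_def wnorm2_scale s0_def using nnw by (simp add: add_nonneg_nonneg algebra_simps)
    have taupos: "wnorm2 S (X t j) + wnorm2 S (X t astar) > 0" unfolding tau using vpos s0pos by simp
    have "emeasure (PiM {..<N} (\<lambda>_. mvn betahat S)) {bt \<in> space (PiM {..<N} (\<lambda>_. mvn betahat S)).
            X t astar \<bullet> bt astar \<le> X t j \<bullet> bt j}
          \<le> ennreal (exp (- s0\<^sup>2 / (2 * (wnorm2 S (X t j) + wnorm2 S (X t astar)))))"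
      by (rule pair_tail[OF Sspd]) (use j amax s0nn mu taupos in auto)
    also have "- s0\<^sup>2 / (2 * (wnorm2 S (X t j) + wnorm2 S (X t astar))) = - 1 / (2 * v\<^sup>2)"
      unfolding tau using s0pos vpos by (simp add: field_simps)
    finally have "emeasure M (E j) \<le> ennreal ((1 - gamma * real N) / real N)"
      unfolding E_def MS expv .
    then show ?thesis unfolding P.emeasure_eq_measure using gN Npos
      by (simp add: ennreal_le_iff)
  qed
  define B where "B = {bt \<in> space M. g bt \<notin> Nt}"
  have Bsub: "B \<subseteq> (\<Union>j\<in>J. E j)"
  proof
    fix bt assume bt: "bt \<in> B"
    have gm: "g bt < N \<and> (\<forall>j<N. X t j \<bullet> bt j \<le> X t (g bt) \<bullet> bt (g bt))"
      unfolding g_def by (rule argmax_prop[OF N1])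
    then have "g bt \<in> J" using bt by (auto simp: B_def J_def)
    moreover have "bt \<in> E (g bt)" using gm amax bt by (auto simp: E_def B_def)
    ultimately show "bt \<in> (\<Union>j\<in>J. E j)" by blast
  qed
  have Bm: "B \<in> sets M"
  proof -
    have "B = g -` (UNIV - Nt) \<inter> space M" by (auto simp: B_def)
    also have "\<dots> \<in> sets M" by (rule measurable_sets[OF gmeas]) simp
    finally show ?thesis .
  qed
  have EJ: "E ` J \<subseteq> sets M" using Em by (auto simp: J_def)
  have "measure M B \<le> measure M (\<Union>j\<in>J. E j)"
    by (rule P.finite_measure_mono[OF Bsub]) (use EJ finJ in auto)
  also have "\<dots> \<le> (\<Sum>j\<in>J. measure M (E j))"
    by (rule P.finite_measure_subadditive_finite[OF finJ EJ])
  also have "\<dots> \<le> (\<Sum>j\<in>J. (1 - gamma * real N) / real N)"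
    by (rule sum_mono) (rule Ebound)
  also have "\<dots> = real (card J) * ((1 - gamma * real N) / real N)" by simp
  also have "\<dots> \<le> (real N - 1) * ((1 - gamma * real N) / real N)"
  proof (rule mult_right_mono)
    show "real (card J) \<le> real N - 1" using cardJ N1 by (simp add: of_nat_diff)
    show "0 \<le> (1 - gamma * real N) / real N" using gN Npos by simp
  qed
  also have "\<dots> \<le> gamma"
  proof -
    have key: "gamma * (real N + 1) * (real N - 1) \<ge> real N - 1"
      using g1 N1 by (simp add: mult_right_mono[of 1 "gamma * (real N + 1)" "real N - 1", simplified])
    have "(real N - 1) * (1 - gamma * real N) \<le> gamma * real N"
      using key gpos by (simp add: algebra_simps)
    then show ?thesis using Npos by (simp add: field_simps)
  qed
  finally have Bb: "measure M B \<le> gamma" .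
  have "{bt \<in> space M. argmax_arm N (\<lambda>i. X t i \<bullet> bt i) \<in> Nt} = space M - B"
    by (auto simp: B_def g_def)
  then have "measure M {bt \<in> space M. argmax_arm N (\<lambda>i. X t i \<bullet> bt i) \<in> Nt} = 1 - measure M B"
    using P.prob_compl[OF Bm] by simp
  then show ?thesis using Bb by simp
qed


end
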